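(* Under the ICMHD equations, $$\frac{D^2(\rho^{-1}\mathbf{B})}{Dt^2}-\frac{d^2\mathbf{B}}{ds^2}=-\frac{d}{ds}\big(\rho^{-1}\nabla\varpi\big),$$ equivalently $\frac{D^2\mathbf{B}_\rho}{Dt^2}=\frac{d}{ds}\frac{D\mathbf{u}}{Dt}=\mathbf{B}_\rho\cdot\nabla\Big(-\rho^{-1}\nabla p+\mathbf{J}\times\mathbf{B}_\rho\Big)$.
   Context: ICMHD setting: smooth fields on a domain of $\mathbb{R}^3$: velocity $\mathbf{u}$, density $\rho>0$, specific entropy $\sigma$, pressure $p$, magnetic field $\mathbf{B}$ with $\operatorname{div}\mathbf{B}=0$, current $\mathbf{J}=\operatorname{curl}\mathbf{B}$, satisfying $$\rho\frac{D\mathbf{u}}{Dt}=-\nabla p+\mathbf{J}\times\mathbf{B},\quad \partial_t\mathbf{B}=\operatorname{curl}(\mathbf{u}\times\mathbf{B}),\quad \frac{D\sigma}{Dt}=0,\quad \frac{D\rho^{-1}}{Dt}=\rho^{-1}\operatorname{div}\mathbf{u},$$ with $\frac{D}{Dt}=\partial_t+\mathbf{u}\cdot\nabla$. Notation: $\mathbf{B}_\rho=\rho^{-1}\mathbf{B}$, $\frac{d}{ds}=\mathbf{B}_\rho\cdot\nabla$ (applied componentwise to vectors), $\varpi=p+\tfrac12|\mathbf{B}|^2$. *)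

theory Defs
  imports "HOL-Analysis.Analysis"
begin

type_synonym pt = "real \<times> (real^3)"

definition dirderiv :: "pt \<Rightarrow> (pt \<Rightarrow> 'b::real_normed_vector) \<Rightarrow> pt \<Rightarrow> 'b" where
  "dirderiv v f p = vector_derivative (\<lambda>h::real. f (p + h *\<^sub>R v)) (at 0)"

fun iter_dirderiv :: "pt list \<Rightarrow> (pt \<Rightarrow> 'b::real_normed_vector) \<Rightarrow> pt \<Rightarrow> 'b" where
  "iter_dirderiv [] f = f"
| "iter_dirderiv (v # vs) f = dirderiv v (iter_dirderiv vs f)"

definition smooth_on :: "pt set \<Rightarrow> (pt \<Rightarrow> 'b::real_normed_vector) \<Rightarrow> bool" where
  "smooth_on S f \<longleftrightarrow> (\<forall>vs. set vs \<subseteq> Basis \<longrightarrow> iter_dirderiv vs f differentiable_on S)"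

definition dt :: "(pt \<Rightarrow> 'b::real_normed_vector) \<Rightarrow> pt \<Rightarrow> 'b" where
  "dt f = dirderiv (1, 0) f"

definition dx :: "3 \<Rightarrow> (pt \<Rightarrow> 'b::real_normed_vector) \<Rightarrow> pt \<Rightarrow> 'b" where
  "dx i f = dirderiv (0, axis i 1) f"

definition grad :: "(pt \<Rightarrow> real) \<Rightarrow> pt \<Rightarrow> real^3" where
  "grad f p = (\<chi> i. dx i f p)"

definition divg :: "(pt \<Rightarrow> real^3) \<Rightarrow> pt \<Rightarrow> real" where
  "divg F p = (\<Sum>i\<in>UNIV. dx i (\<lambda>q. F q $ i) p)"

definition curl :: "(pt \<Rightarrow> real^3) \<Rightarrow> pt \<Rightarrow> real^3" where
  "curl F p = vector [dx 2 (\<lambda>q. F q $ 3) p - dx 3 (\<lambda>q. F q $ 2) p,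
                      dx 3 (\<lambda>q. F q $ 1) p - dx 1 (\<lambda>q. F q $ 3) p,
                      dx 1 (\<lambda>q. F q $ 2) p - dx 2 (\<lambda>q. F q $ 1) p]"

text \<open>Material derivative D/Dt = \<partial>_t + u\<cdot>\<nabla> (componentwise on vectors).\<close>
definition matder :: "(pt \<Rightarrow> real^3) \<Rightarrow> (pt \<Rightarrow> 'b::real_normed_vector) \<Rightarrow> pt \<Rightarrow> 'b" where
  "matder u f p = dt f p + (\<Sum>i\<in>UNIV. (u p $ i) *\<^sub>R dx i f p)"

definition along :: "(pt \<Rightarrow> real^3) \<Rightarrow> (pt \<Rightarrow> 'b::real_normed_vector) \<Rightarrow> pt \<Rightarrow> 'b" where
  "along w f p = (\<Sum>i\<in>UNIV. (w p $ i) *\<^sub>R dx i f p)"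

text \<open>B_\<rho> = \<rho>^{-1} B and d/ds = B_\<rho>\<cdot>\<nabla>.\<close>
definition Brho :: "(pt \<Rightarrow> real) \<Rightarrow> (pt \<Rightarrow> real^3) \<Rightarrow> pt \<Rightarrow> real^3" where
  "Brho \<rho> B p = inverse (\<rho> p) *\<^sub>R B p"

definition dds :: "(pt \<Rightarrow> real) \<Rightarrow> (pt \<Rightarrow> real^3) \<Rightarrow> (pt \<Rightarrow> 'b::real_normed_vector) \<Rightarrow> pt \<Rightarrow> 'b" where
  "dds \<rho> B f = along (Brho \<rho> B) f"

definition ICMHD :: "pt set \<Rightarrow> (pt \<Rightarrow> real^3) \<Rightarrow> (pt \<Rightarrow> real) \<Rightarrow> (pt \<Rightarrow> real)
    \<Rightarrow> (pt \<Rightarrow> real) \<Rightarrow> (pt \<Rightarrow> real^3) \<Rightarrow> bool" where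
  "ICMHD \<Omega> u \<rho> \<sigma> pr B \<longleftrightarrow>
     open \<Omega> \<and>
     smooth_on \<Omega> u \<and> smooth_on \<Omega> \<rho> \<and> smooth_on \<Omega> \<sigma> \<and> smooth_on \<Omega> pr \<and> smooth_on \<Omega> B \<and>
     (\<forall>p\<in>\<Omega>.
        \<rho> p > 0 \<and>
        divg B p = 0 \<and>
        \<rho> p *\<^sub>R matder u u p = - grad pr p + cross3 (curl B p) (B p) \<and>
        dt B p = curl (\<lambda>q. cross3 (u q) (B q)) p \<and>
        matder u \<sigma> p = 0 \<and>
        matder u (\<lambda>q. inverse (\<rho> q)) p = inverse (\<rho> p) * divg u p)"

text \<open>Total pressure \<varpi> = p + |B|^2/2.\<close>
definition totpress :: "(pt \<Rightarrow> real) \<Rightarrow> (pt \<Rightarrow> real^3) \<Rightarrow> pt \<Rightarrow> real" where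
  "totpress pr B q = pr q + (1/2) * (norm (B q))\<^sup>2"

end

theory Submission
  imports Defs "HOL-Analysis.Analysis"
begin

lemma dd_hasderiv:
  assumes "(f has_derivative f') (at x)"
  shows "dirderiv v f x = f' v"
proof -
  have l: "linear f'" using assms has_derivative_linear by blast
  have "((\<lambda>h::real. x + h *\<^sub>R v) has_derivative (\<lambda>h. h *\<^sub>R v)) (at 0)"
    by (auto intro!: derivative_eq_intros)
  moreover have "(f has_derivative f') (at (x + (0::real) *\<^sub>R v))" using assms by simp
  ultimately have "((\<lambda>h. f (x + h *\<^sub>R v)) has_derivative (\<lambda>h. f' (h *\<^sub>R v))) (at 0)"
    by (rule has_derivative_compose)
  then have "((\<lambda>h. f (x + h *\<^sub>R v)) has_vector_derivative f' v) (at 0)"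
    unfolding has_vector_derivative_def using linear_cmul[OF l] by simp
  then show ?thesis unfolding dirderiv_def by (rule vector_derivative_at)
qed

lemma dd_frechet:
  "f differentiable (at x) \<Longrightarrow> dirderiv v f x = frechet_derivative f (at x) v"
  by (rule dd_hasderiv) (simp add: frechet_derivative_works[symmetric])

lemma dd_bilin:
  assumes "bounded_bilinear bp" "f differentiable (at x)" "g differentiable (at x)"
  shows "dirderiv v (\<lambda>q. bp (f q) (g q)) x = bp (dirderiv v f x) (g x) + bp (f x) (dirderiv v g x)"
proof -
  have "((\<lambda>q. bp (f q) (g q)) has_derivative
     (\<lambda>h. bp (f x) (frechet_derivative g (at x) h) + bp (frechet_derivative f (at x) h) (g x))) (at x)"
    by (rule bounded_bilinear.FDERIV[OF assms(1)])
      (use assms in \<open>simp_all add: frechet_derivative_works[symmetric]\<close>)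
  then show ?thesis using assms by (simp add: dd_hasderiv dd_frechet)
qed

lemma diff_bilin:
  assumes "bounded_bilinear bp" "f differentiable (at x)" "g differentiable (at x)"
  shows "(\<lambda>q. bp (f q) (g q)) differentiable (at x)"
  using bounded_bilinear.FDERIV[OF assms(1)] assms(2,3) unfolding differentiable_def by blast

lemma dd_lin:
  assumes "bounded_linear L" "f differentiable (at x)"
  shows "dirderiv v (\<lambda>q. L (f q)) x = L (dirderiv v f x)"
proof -
  have "((\<lambda>q. L (f q)) has_derivative (\<lambda>h. L (frechet_derivative f (at x) h))) (at x)"
    by (rule bounded_linear.has_derivative[OF assms(1)])
      (use assms in \<open>simp_all add: frechet_derivative_works[symmetric]\<close>)
  then show ?thesis using assms by (simp add: dd_hasderiv dd_frechet)
qed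

lemma diff_lin:
  assumes "bounded_linear L" "f differentiable (at x)"
  shows "(\<lambda>q. L (f q)) differentiable (at x)"
  using bounded_linear.has_derivative[OF assms(1)] assms(2) unfolding differentiable_def by blast

lemma dd_sum:
  assumes "\<And>i. i \<in> I \<Longrightarrow> f i differentiable (at x)"
  shows "dirderiv v (\<lambda>q. \<Sum>i\<in>I. f i q) x = (\<Sum>i\<in>I. dirderiv v (f i) x)"
proof -
  have "((\<lambda>q. \<Sum>i\<in>I. f i q) has_derivative (\<lambda>h. \<Sum>i\<in>I. frechet_derivative (f i) (at x) h)) (at x)"
    by (rule has_derivative_sum) (use assms in \<open>simp add: frechet_derivative_works[symmetric]\<close>)
  then show ?thesis using assms by (simp add: dd_hasderiv dd_frechet)
qed

lemma diff_sum:
  assumes "\<And>i. i \<in> I \<Longrightarrow> f i differentiable (at x)"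
  shows "(\<lambda>q. \<Sum>i\<in>I. f i q) differentiable (at x)"
proof -
  have "((\<lambda>q. \<Sum>i\<in>I. f i q) has_derivative (\<lambda>h. \<Sum>i\<in>I. frechet_derivative (f i) (at x) h)) (at x)"
    by (rule has_derivative_sum) (use assms in \<open>simp add: frechet_derivative_works[symmetric]\<close>)
  then show ?thesis unfolding differentiable_def by blast
qed

lemma dd_add:
  assumes "f differentiable (at x)" "g differentiable (at x)"
  shows "dirderiv v (\<lambda>q. f q + g q) x = dirderiv v f x + dirderiv v g x"
proof -
  have "((\<lambda>q. f q + g q) has_derivative (\<lambda>h. frechet_derivative f (at x) h + frechet_derivative g (at x) h)) (at x)"
    by (rule has_derivative_add) (use assms in \<open>simp_all add: frechet_derivative_works[symmetric]\<close>)
  then show ?thesis using assms by (simp add: dd_hasderiv dd_frechet)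
qed

lemma dd_diff:
  assumes "f differentiable (at x)" "g differentiable (at x)"
  shows "dirderiv v (\<lambda>q. f q - g q) x = dirderiv v f x - dirderiv v g x"
proof -
  have "((\<lambda>q. f q - g q) has_derivative (\<lambda>h. frechet_derivative f (at x) h - frechet_derivative g (at x) h)) (at x)"
    by (rule has_derivative_diff) (use assms in \<open>simp_all add: frechet_derivative_works[symmetric]\<close>)
  then show ?thesis using assms by (simp add: dd_hasderiv dd_frechet)
qed

lemma dd_local:
  assumes "open S" "x \<in> S" "\<And>y. y \<in> S \<Longrightarrow> f y = g y"
  shows "dirderiv v f x = dirderiv v g x"
proof -
  obtain e where e: "e > 0" "ball x e \<subseteq> S" using assms openE by blast
  have ev: "eventually (\<lambda>h::real. f (x + h *\<^sub>R v) = g (x + h *\<^sub>R v)) (nhds 0)"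
  proof -
    have "eventually (\<lambda>h. x + h *\<^sub>R v \<in> ball x e) (nhds (0::real))"
      unfolding eventually_nhds_metric
    proof (intro exI conjI allI impI)
      show "e / (norm v + 1) > 0" by (metis e(1) norm_ge_zero add_nonneg_pos zero_less_one divide_pos_pos)
      fix h :: real assume "dist h 0 < e / (norm v + 1)"
      then have "\<bar>h\<bar> * (norm v + 1) < e" by (simp add: field_simps add_pos_nonneg pos_less_divide_eq)
      moreover have "\<bar>h\<bar> * norm v \<le> \<bar>h\<bar> * (norm v + 1)" by (simp add: mult_left_mono)
      ultimately show "x + h *\<^sub>R v \<in> ball x e" by (simp add: dist_norm)
    qed
    then show ?thesis by eventually_elim (use e(2) assms(3) in blast)
  qed
  have ev': "eventually (\<lambda>h::real. h \<in> UNIV \<longrightarrow> f (x + h *\<^sub>R v) = g (x + h *\<^sub>R v)) (nhds 0)"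
    using ev by simp
  from vector_derivative_cong_eq[OF ev' refl refl UNIV_I] show ?thesis
    unfolding dirderiv_def by simp
qed


lemma dd_line:
  fixes f :: "pt \<Rightarrow> real"
  assumes "f differentiable (at (a + s *\<^sub>R v))"
  shows "((\<lambda>t. f (a + t *\<^sub>R v)) has_real_derivative dirderiv v f (a + s *\<^sub>R v)) (at s)"
proof -
  let ?F = "frechet_derivative f (at (a + s *\<^sub>R v))"
  have F: "(f has_derivative ?F) (at (a + s *\<^sub>R v))" using assms frechet_derivative_works by blast
  have l: "linear ?F" using F has_derivative_linear by blast
  have "((\<lambda>t::real. a + t *\<^sub>R v) has_derivative (\<lambda>h. h *\<^sub>R v)) (at s)"
    by (auto intro!: derivative_eq_intros)
  from has_derivative_compose[OF this F]
  have "((\<lambda>t. f (a + t *\<^sub>R v)) has_derivative (\<lambda>h. ?F (h *\<^sub>R v))) (at s)" .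
  moreover have "(\<lambda>h. ?F (h *\<^sub>R v)) = (*) (?F v)"
    using linear_cmul[OF l] by (auto simp: mult.commute)
  ultimately show ?thesis
    using dd_frechet[OF assms] by (simp add: has_field_derivative_def)
qed

lemma schwarz_half:
  fixes f :: "pt \<Rightarrow> real"
  assumes "open \<Omega>" and inO: "\<And>s t. 0 \<le> s \<Longrightarrow> s \<le> h \<Longrightarrow> 0 \<le> t \<Longrightarrow> t \<le> h \<Longrightarrow> p + s *\<^sub>R v + t *\<^sub>R w \<in> \<Omega>"
    and df: "f differentiable_on \<Omega>" and dvf: "dirderiv v f differentiable_on \<Omega>" and h: "0 < h"
  shows "\<exists>\<xi> \<eta>. 0 < \<xi> \<and> \<xi> < h \<and> 0 < \<eta> \<and> \<eta> < h \<and>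
     f (p + h *\<^sub>R v + h *\<^sub>R w) - f (p + h *\<^sub>R v) - f (p + h *\<^sub>R w) + f p
       = h * h * dirderiv w (dirderiv v f) (p + \<xi> *\<^sub>R v + \<eta> *\<^sub>R w)"
proof -
  have dfa: "f differentiable (at (p + s *\<^sub>R v + t *\<^sub>R w))" if "0 \<le> s" "s \<le> h" "0 \<le> t" "t \<le> h" for s t
    using df inO[OF that] \<open>open \<Omega>\<close> differentiable_on_eq_differentiable_at by blast
  have dvfa: "dirderiv v f differentiable (at (p + s *\<^sub>R v + t *\<^sub>R w))" if "0 \<le> s" "s \<le> h" "0 \<le> t" "t \<le> h" for s t
    using dvf inO[OF that] \<open>open \<Omega>\<close> differentiable_on_eq_differentiable_at by blast
  define g where "g s = f ((p + h *\<^sub>R w) + s *\<^sub>R v) - f (p + s *\<^sub>R v)" for s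
  have "\<exists>\<xi>. 0 < \<xi> \<and> \<xi> < h \<and> g h - g 0 = (h - 0) *
      (dirderiv v f ((p + h *\<^sub>R w) + \<xi> *\<^sub>R v) - dirderiv v f (p + \<xi> *\<^sub>R v))"
  proof (rule MVT2[OF h])
    fix s :: real assume s: "0 \<le> s" "s \<le> h"
    have d1: "f differentiable (at ((p + h *\<^sub>R w) + s *\<^sub>R v))"
      using dfa[of s h] s h by (simp add: add_ac)
    have d2: "f differentiable (at (p + s *\<^sub>R v))"
      using dfa[of s 0] s h by simp
    show "(g has_real_derivative
        dirderiv v f ((p + h *\<^sub>R w) + s *\<^sub>R v) - dirderiv v f (p + s *\<^sub>R v)) (at s)"
      unfolding g_def by (intro DERIV_diff dd_line d1 d2)
  qed
  then obtain \<xi> where xi: "0 < \<xi>" "\<xi> < h" and gx: "g h - g 0 = h *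
      (dirderiv v f ((p + h *\<^sub>R w) + \<xi> *\<^sub>R v) - dirderiv v f (p + \<xi> *\<^sub>R v))" by auto
  define k where "k t = dirderiv v f ((p + \<xi> *\<^sub>R v) + t *\<^sub>R w)" for t
  have "\<exists>\<eta>. 0 < \<eta> \<and> \<eta> < h \<and> k h - k 0 = (h - 0) *
      dirderiv w (dirderiv v f) ((p + \<xi> *\<^sub>R v) + \<eta> *\<^sub>R w)"
  proof (rule MVT2[OF h])
    fix t :: real assume t: "0 \<le> t" "t \<le> h"
    show "(k has_real_derivative dirderiv w (dirderiv v f) ((p + \<xi> *\<^sub>R v) + t *\<^sub>R w)) (at t)"
      unfolding k_def by (intro dd_line dvfa) (use xi t in auto)
  qed
  then obtain \<eta> where eta: "0 < \<eta>" "\<eta> < h" and kx: "k h - k 0 = h *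
      dirderiv w (dirderiv v f) ((p + \<xi> *\<^sub>R v) + \<eta> *\<^sub>R w)" by auto
  have "dirderiv v f ((p + h *\<^sub>R w) + \<xi> *\<^sub>R v) - dirderiv v f (p + \<xi> *\<^sub>R v) = k h - k 0"
    unfolding k_def by (simp add: add_ac)
  moreover have "g h - g 0 = f (p + h *\<^sub>R v + h *\<^sub>R w) - f (p + h *\<^sub>R v) - f (p + h *\<^sub>R w) + f p"
    unfolding g_def by (simp add: add_ac)
  ultimately show ?thesis using xi eta gx kx by (intro exI[of _ \<xi>] exI[of _ \<eta>]) auto
qed

lemma schwarz_real:
  fixes f :: "pt \<Rightarrow> real"
  assumes O: "open \<Omega>" "p \<in> \<Omega>" and df: "f differentiable_on \<Omega>"
    and dv: "dirderiv v f differentiable_on \<Omega>" and dw: "dirderiv w f differentiable_on \<Omega>"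
    and cA: "continuous (at p) (dirderiv w (dirderiv v f))"
    and cB: "continuous (at p) (dirderiv v (dirderiv w f))"
  shows "dirderiv w (dirderiv v f) p = dirderiv v (dirderiv w f) p"
proof (rule ccontr)
  let ?A = "dirderiv w (dirderiv v f)" and ?B = "dirderiv v (dirderiv w f)"
  assume ne: "?A p \<noteq> ?B p"
  define e where "e = \<bar>?A p - ?B p\<bar> / 2"
  have e: "e > 0" using ne by (simp add: e_def)
  obtain r where r: "r > 0" "ball p r \<subseteq> \<Omega>" using O openE by blast
  obtain d1 where d1: "d1 > 0" "\<And>q. dist q p < d1 \<Longrightarrow> dist (?A q) (?A p) < e"
    using cA e unfolding continuous_at_eps_delta by blast
  obtain d2 where d2: "d2 > 0" "\<And>q. dist q p < d2 \<Longrightarrow> dist (?B q) (?B p) < e"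
    using cB e unfolding continuous_at_eps_delta by blast
  define m where "m = min r (min d1 d2)"
  have m: "m > 0" "m \<le> r" "m \<le> d1" "m \<le> d2" using r d1 d2 by (auto simp: m_def)
  define N where "N = norm v + norm w + 1"
  have N: "N > 0" "norm v + norm w < N" by (auto simp: N_def add_nonneg_pos)
  define h where "h = m / (2 * N)"
  have h: "h > 0" using m N by (simp add: h_def)
  have hN: "h * N < m" using m N by (simp add: h_def field_simps)
  have close: "dist (p + s *\<^sub>R a + t *\<^sub>R b) p < m"
    if "0 \<le> s" "s \<le> h" "0 \<le> t" "t \<le> h" "norm a + norm b < N" for s t a b
  proof -
    have "dist (p + s *\<^sub>R a + t *\<^sub>R b) p = norm (s *\<^sub>R a + t *\<^sub>R b)" by (simp add: dist_norm)
    also have "\<dots> \<le> s * norm a + t * norm b"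
      using norm_triangle_ineq[of "s *\<^sub>R a" "t *\<^sub>R b"] that by simp
    also have "\<dots> \<le> h * norm a + h * norm b"
      using that by (intro add_mono mult_right_mono) auto
    also have "\<dots> \<le> h * N" using that h by (simp add: distrib_left[symmetric])
    also have "\<dots> < m" by (rule hN)
    finally show ?thesis .
  qed
  have inO: "p + s *\<^sub>R a + t *\<^sub>R b \<in> \<Omega>"
    if "0 \<le> s" "s \<le> h" "0 \<le> t" "t \<le> h" "norm a + norm b < N" for s t a b
    using close[OF that] m r by (auto simp: dist_commute)
  obtain \<xi> \<eta> where xe: "0 < \<xi>" "\<xi> < h" "0 < \<eta>" "\<eta> < h" and E1:
     "f (p + h *\<^sub>R v + h *\<^sub>R w) - f (p + h *\<^sub>R v) - f (p + h *\<^sub>R w) + f p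
       = h * h * ?A (p + \<xi> *\<^sub>R v + \<eta> *\<^sub>R w)"
    using schwarz_half[OF O(1) _ df dv h, of p w] inO N by blast
  obtain \<xi>' \<eta>' where xe': "0 < \<xi>'" "\<xi>' < h" "0 < \<eta>'" "\<eta>' < h" and E2:
     "f (p + h *\<^sub>R w + h *\<^sub>R v) - f (p + h *\<^sub>R w) - f (p + h *\<^sub>R v) + f p
       = h * h * ?B (p + \<xi>' *\<^sub>R w + \<eta>' *\<^sub>R v)"
    using schwarz_half[OF O(1) _ df dw h, of p v] inO[of _ _ w v] N by (auto simp: add.commute)
  have pe: "p + h *\<^sub>R w + h *\<^sub>R v = p + h *\<^sub>R v + h *\<^sub>R w" by (simp add: add_ac)
  from E1 E2[unfolded pe] have "h * h * ?A (p + \<xi> *\<^sub>R v + \<eta> *\<^sub>R w) = h * h * ?B (p + \<xi>' *\<^sub>R w + \<eta>' *\<^sub>R v)"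
    by linarith
  then have eq: "?A (p + \<xi> *\<^sub>R v + \<eta> *\<^sub>R w) = ?B (p + \<xi>' *\<^sub>R w + \<eta>' *\<^sub>R v)"
    using h by simp
  have c1: "dist (?A (p + \<xi> *\<^sub>R v + \<eta> *\<^sub>R w)) (?A p) < e"
    using d1(2) close[of \<xi> \<eta> v w] xe N m by auto
  have c2: "dist (?B (p + \<xi>' *\<^sub>R w + \<eta>' *\<^sub>R v)) (?B p) < e"
    using d2(2) close[of \<xi>' \<eta>' w v] xe' N m by (auto simp: add.commute)
  from c1 c2 eq have "\<bar>?A p - ?B p\<bar> < 2 * e" by (simp add: dist_real_def)
  then show False by (simp add: e_def)
qed


lemma diff_local:
  assumes "open S" "x \<in> S" "\<And>y. y \<in> S \<Longrightarrow> f y = g y" "f differentiable (at x)"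
  shows "g differentiable (at x)"
  using has_derivative_transform_within_open[of f _ x UNIV S g] assms
  unfolding differentiable_def by blast

lemma diffon_at: "open S \<Longrightarrow> f differentiable_on S \<Longrightarrow> x \<in> S \<Longrightarrow> f differentiable (at x)"
  using differentiable_on_eq_differentiable_at by blast

lemma schwarz_vec:
  fixes f :: "pt \<Rightarrow> real^3"
  assumes O: "open \<Omega>" "p \<in> \<Omega>" and df: "f differentiable_on \<Omega>"
    and dv: "dirderiv v f differentiable_on \<Omega>" and dw: "dirderiv w f differentiable_on \<Omega>"
    and dA: "dirderiv w (dirderiv v f) differentiable_on \<Omega>"
    and dB: "dirderiv v (dirderiv w f) differentiable_on \<Omega>"
  shows "dirderiv w (dirderiv v f) p = dirderiv v (dirderiv w f) p"
proof (rule iffD2[OF vec_eq_iff], rule allI)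
  fix k
  let ?g = "\<lambda>q. f q $ k"
  have gv: "dirderiv v ?g y = dirderiv v f y $ k" if "y \<in> \<Omega>" for y v
    using dd_lin[OF bounded_linear_vec_nth diffon_at[OF O(1) df that]] .
  have dgv: "dirderiv v ?g differentiable (at y)" if "y \<in> \<Omega>" for y
    by (rule diff_local[OF O(1) that, of "\<lambda>q. dirderiv v f q $ k"])
       (use gv diff_lin[OF bounded_linear_vec_nth diffon_at[OF O(1) dv that]] in auto)
  have dgw: "dirderiv w ?g differentiable (at y)" if "y \<in> \<Omega>" for y
    by (rule diff_local[OF O(1) that, of "\<lambda>q. dirderiv w f q $ k"])
       (use gv diff_lin[OF bounded_linear_vec_nth diffon_at[OF O(1) dw that]] in auto)
  have A: "dirderiv w (dirderiv v ?g) y = dirderiv w (dirderiv v f) y $ k" if "y \<in> \<Omega>" for y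
  proof -
    have "dirderiv w (dirderiv v ?g) y = dirderiv w (\<lambda>q. dirderiv v f q $ k) y"
      by (rule dd_local[OF O(1) that]) (use gv in auto)
    also have "\<dots> = dirderiv w (dirderiv v f) y $ k"
      by (rule dd_lin[OF bounded_linear_vec_nth diffon_at[OF O(1) dv that]])
    finally show ?thesis .
  qed
  have B: "dirderiv v (dirderiv w ?g) y = dirderiv v (dirderiv w f) y $ k" if "y \<in> \<Omega>" for y
  proof -
    have "dirderiv v (dirderiv w ?g) y = dirderiv v (\<lambda>q. dirderiv w f q $ k) y"
      by (rule dd_local[OF O(1) that]) (use gv in auto)
    also have "\<dots> = dirderiv v (dirderiv w f) y $ k"
      by (rule dd_lin[OF bounded_linear_vec_nth diffon_at[OF O(1) dw that]])
    finally show ?thesis .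
  qed
  have cA: "continuous (at p) (dirderiv w (dirderiv v ?g))"
  proof -
    have dd: "(\<lambda>q. dirderiv w (dirderiv v f) q $ k) differentiable (at p)"
      by (rule diff_lin[OF bounded_linear_vec_nth diffon_at[OF O(1) dA O(2)]])
    have "dirderiv w (dirderiv v ?g) differentiable (at p)"
      by (rule diff_local[OF O(1) O(2) _ dd]) (simp add: A)
    then show ?thesis using differentiable_imp_continuous_within by blast
  qed
  have cB: "continuous (at p) (dirderiv v (dirderiv w ?g))"
  proof -
    have dd: "(\<lambda>q. dirderiv v (dirderiv w f) q $ k) differentiable (at p)"
      by (rule diff_lin[OF bounded_linear_vec_nth diffon_at[OF O(1) dB O(2)]])
    have "dirderiv v (dirderiv w ?g) differentiable (at p)"
      by (rule diff_local[OF O(1) O(2) _ dd]) (simp add: B)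
    then show ?thesis using differentiable_imp_continuous_within by blast
  qed
  have "dirderiv w (dirderiv v ?g) p = dirderiv v (dirderiv w ?g) p"
  proof (rule schwarz_real[OF O])
    show "?g differentiable_on \<Omega>"
      using diff_lin[OF bounded_linear_vec_nth diffon_at[OF O(1) df]] O(1)
      by (auto simp: differentiable_on_eq_differentiable_at)
    show "dirderiv v ?g differentiable_on \<Omega>" using dgv O(1)
      by (auto simp: differentiable_on_eq_differentiable_at)
    show "dirderiv w ?g differentiable_on \<Omega>" using dgw O(1)
      by (auto simp: differentiable_on_eq_differentiable_at)
  qed (use cA cB in auto)
  then show "dirderiv w (dirderiv v f) p $ k = dirderiv v (dirderiv w f) p $ k"
    using A[OF O(2)] B[OF O(2)] by simp
qed


lemma iter_snoc: "iter_dirderiv (vs @ [b]) f = iter_dirderiv vs (dirderiv b f)"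
  by (induction vs) auto

lemma smooth_dd: "smooth_on S f \<Longrightarrow> b \<in> Basis \<Longrightarrow> smooth_on S (dirderiv b f)"
  unfolding smooth_on_def
proof (intro allI impI)
  fix vs :: "pt list"
  assume "\<forall>vs. set vs \<subseteq> Basis \<longrightarrow> iter_dirderiv vs f differentiable_on S" "b \<in> Basis" "set vs \<subseteq> Basis"
  then have "iter_dirderiv (vs @ [b]) f differentiable_on S" by auto
  then show "iter_dirderiv vs (dirderiv b f) differentiable_on S" by (simp add: iter_snoc)
qed

lemma smooth_diffon: "smooth_on S f \<Longrightarrow> f differentiable_on S"
  unfolding smooth_on_def by (metis empty_subsetI iter_dirderiv.simps(1) list.set(1))

lemma e0_Basis: "((1::real), (0::real^3)) \<in> Basis"
  by (simp add: Basis_prod_def)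

lemma ex_Basis: "((0::real), axis i (1::real)) \<in> Basis"
  by (auto simp: Basis_prod_def Basis_vec_def)

lemma smooth_dt: "smooth_on S f \<Longrightarrow> smooth_on S (dt f)"
  unfolding dt_def using smooth_dd e0_Basis by blast

lemma smooth_dx: "smooth_on S f \<Longrightarrow> smooth_on S (dx i f)"
  unfolding dx_def using smooth_dd ex_Basis by blast

lemma bb_cross: "bounded_bilinear cross3"
  using bilinear_conv_bounded_bilinear bilinear_cross by blast

lemma curl_cross_alg:
  fixes U1 U2 U3 B1 B2 B3 a b :: "real^3"
  shows "vector [(cross3 U2 b + cross3 a B2)$3 - (cross3 U3 b + cross3 a B3)$2,
                 (cross3 U3 b + cross3 a B3)$1 - (cross3 U1 b + cross3 a B1)$3,
                 (cross3 U1 b + cross3 a B1)$2 - (cross3 U2 b + cross3 a B2)$1]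
   = (B1$1 + B2$2 + B3$3) *\<^sub>R a - (U1$1 + U2$2 + U3$3) *\<^sub>R b
     + (b$1 *\<^sub>R U1 + b$2 *\<^sub>R U2 + b$3 *\<^sub>R U3) - (a$1 *\<^sub>R B1 + a$2 *\<^sub>R B2 + a$3 *\<^sub>R B3)"
  by (simp add: vec_eq_iff forall_3 cross3_def vector_3 algebra_simps)


theorem mainTheorem6:
  fixes \<Omega> :: "pt set" and u B :: "pt \<Rightarrow> real^3" and \<rho> \<sigma> pr :: "pt \<Rightarrow> real"
  assumes "ICMHD \<Omega> u \<rho> \<sigma> pr B"
    and "p \<in> \<Omega>"
  shows "(matder u (matder u (Brho \<rho> B)) p - dds \<rho> B (dds \<rho> B B) p
           = - dds \<rho> B (\<lambda>q. inverse (\<rho> q) *\<^sub>R grad (totpress pr B) q) p)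
         \<and> (matder u (matder u (Brho \<rho> B)) p = dds \<rho> B (matder u u) p)
         \<and> (matder u (matder u (Brho \<rho> B)) p
           = along (Brho \<rho> B) (\<lambda>q. - (inverse (\<rho> q) *\<^sub>R grad pr q)
                                    + cross3 (curl B q) (Brho \<rho> B q)) p)"
proof -
  note H = assms(1)[unfolded ICMHD_def]
  have O: "open \<Omega>" using H by blast
  have su: "smooth_on \<Omega> u" and sr: "smooth_on \<Omega> \<rho>" and sB: "smooth_on \<Omega> B" and sp: "smooth_on \<Omega> pr"
    using H by blast+
  have Hq: "\<rho> q > 0 \<and> divg B q = 0 \<and> \<rho> q *\<^sub>R matder u u q = - grad pr q + cross3 (curl B q) (B q) \<and>
        dt B q = curl (\<lambda>q. cross3 (u q) (B q)) q \<and>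
        matder u (\<lambda>q. inverse (\<rho> q)) q = inverse (\<rho> q) * divg u q" if "q \<in> \<Omega>" for q
    using H that by blast
  define ir where "ir = (\<lambda>q. inverse (\<rho> q))"
  define b where "b = Brho \<rho> B"
  have b_eq: "b = (\<lambda>q. ir q *\<^sub>R B q)" by (auto simp: b_def ir_def Brho_def)
  have dA: "\<And>f q. smooth_on \<Omega> f \<Longrightarrow> q \<in> \<Omega> \<Longrightarrow> f differentiable (at q)"
    using O diffon_at smooth_diffon by blast
  have du: "u differentiable (at q)" and dB: "B differentiable (at q)" and dr: "\<rho> differentiable (at q)"
    and dpr: "pr differentiable (at q)" if "q \<in> \<Omega>" for q
    using dA su sB sr sp that by blast+
  have dir: "ir differentiable (at q)" if "q \<in> \<Omega>" for q
    unfolding ir_def using dr[OF that] Hq[OF that] by (intro differentiable_inverse) auto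
  have db: "b differentiable (at q)" if "q \<in> \<Omega>" for q
    unfolding b_eq by (rule diff_bilin[OF bounded_bilinear_scaleR dir[OF that] dB[OF that]])
  have ddb: "dirderiv v b q = dirderiv v ir q *\<^sub>R B q + ir q *\<^sub>R dirderiv v B q" if "q \<in> \<Omega>" for q v
    unfolding b_eq by (rule dd_bilin[OF bounded_bilinear_scaleR dir[OF that] dB[OF that]])
  have dcomp: "dirderiv v (\<lambda>q. F q $ k) q = dirderiv v F q $ k" if "F differentiable (at q)" for F q v k
    by (rule dd_lin[OF bounded_linear_vec_nth that])
  have dxc: "dx i (\<lambda>q. F q $ k) q = dx i F q $ k" if "F differentiable (at q)" for F q i k
    unfolding dx_def by (rule dcomp[OF that])
  have step1: "matder u b q = along b u q" if q: "q \<in> \<Omega>" for q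
  proof -
    have mb: "matder u b q = matder u ir q *\<^sub>R B q + ir q *\<^sub>R matder u B q"
      unfolding matder_def dt_def dx_def by (simp add: ddb[OF q] sum_3 algebra_simps)
    have dcx: "dx i (\<lambda>q. cross3 (u q) (B q) $ k) q = (cross3 (dx i u q) (B q) + cross3 (u q) (dx i B q)) $ k" for i k
      using dxc[OF diff_bilin[OF bb_cross du[OF q] dB[OF q]], of i k]
        dd_bilin[OF bb_cross du[OF q] dB[OF q], of "(0, axis i 1)"]
      by (simp add: dx_def)
    have cu: "curl (\<lambda>q. cross3 (u q) (B q)) q =
       (dx 1 B q $ 1 + dx 2 B q $ 2 + dx 3 B q $ 3) *\<^sub>R u q - (dx 1 u q $ 1 + dx 2 u q $ 2 + dx 3 u q $ 3) *\<^sub>R B q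
     + (B q $ 1 *\<^sub>R dx 1 u q + B q $ 2 *\<^sub>R dx 2 u q + B q $ 3 *\<^sub>R dx 3 u q)
     - (u q $ 1 *\<^sub>R dx 1 B q + u q $ 2 *\<^sub>R dx 2 B q + u q $ 3 *\<^sub>R dx 3 B q)"
      unfolding curl_def dcx by (rule curl_cross_alg)
    have dvB: "dx 1 B q $ 1 + dx 2 B q $ 2 + dx 3 B q $ 3 = 0"
      using Hq[OF q] by (simp add: divg_def sum_3 dxc[OF dB[OF q]])
    have dvu: "divg u q = dx 1 u q $ 1 + dx 2 u q $ 2 + dx 3 u q $ 3"
      by (simp add: divg_def sum_3 dxc[OF du[OF q]])
    have mir: "matder u ir q = ir q * divg u q" using Hq[OF q] by (simp add: ir_def)
    have ir0: "ir q * \<rho> q = 1" using Hq[OF q] by (simp add: ir_def)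
    show ?thesis
    proof -
      have dtB: "dt B q = (dx 1 B q $ 1 + dx 2 B q $ 2 + dx 3 B q $ 3) *\<^sub>R u q - (dx 1 u q $ 1 + dx 2 u q $ 2 + dx 3 u q $ 3) *\<^sub>R B q
     + (B q $ 1 *\<^sub>R dx 1 u q + B q $ 2 *\<^sub>R dx 2 u q + B q $ 3 *\<^sub>R dx 3 u q)
     - (u q $ 1 *\<^sub>R dx 1 B q + u q $ 2 *\<^sub>R dx 2 B q + u q $ 3 *\<^sub>R dx 3 B q)"
        using Hq[OF q] cu by simp
      have dvB': "dx 1 B q $ 1 = - dx 2 B q $ 2 - dx 3 B q $ 3" using dvB by simp
      show ?thesis
        unfolding mb mir
        unfolding matder_def along_def dtB dvu
        by (simp add: sum_3 b_eq vec_eq_iff forall_3 algebra_simps dvB')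
    qed
  qed
  have dxu: "dx j u differentiable (at q)" if "q \<in> \<Omega>" for q j
    using dA[OF smooth_dx[OF su] that] .
  have dtu: "dt u differentiable (at q)" if "q \<in> \<Omega>" for q
    using dA[OF smooth_dt[OF su] that] .
  have dxB: "dx j B differentiable (at q)" if "q \<in> \<Omega>" for q j
    using dA[OF smooth_dx[OF sB] that] .
  have W_eq: "along b u = (\<lambda>q. \<Sum>j\<in>UNIV. b q $ j *\<^sub>R dx j u q)" by (auto simp: along_def)
  have M_eq: "matder u u = (\<lambda>q. dt u q + (\<Sum>i\<in>UNIV. u q $ i *\<^sub>R dx i u q))" by (auto simp: matder_def)
  have dW: "dirderiv v (along b u) q = (\<Sum>j\<in>UNIV. (dirderiv v b q $ j) *\<^sub>R dx j u q + b q $ j *\<^sub>R dirderiv v (dx j u) q)"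
    if q: "q \<in> \<Omega>" for q v
  proof -
    have dj: "(\<lambda>q. b q $ j) differentiable (at q)" for j
      by (rule diff_lin[OF bounded_linear_vec_nth db[OF q]])
    show ?thesis unfolding W_eq
      by (subst dd_sum, rule diff_bilin[OF bounded_bilinear_scaleR dj dxu[OF q]])
         (simp add: dd_bilin[OF bounded_bilinear_scaleR dj dxu[OF q]] dcomp[OF db[OF q]])
  qed
  have dM: "dirderiv v (matder u u) q = dirderiv v (dt u) q + (\<Sum>i\<in>UNIV. (dirderiv v u q $ i) *\<^sub>R dx i u q + u q $ i *\<^sub>R dirderiv v (dx i u) q)"
    if q: "q \<in> \<Omega>" for q v
  proof -
    have dj: "(\<lambda>q. u q $ j) differentiable (at q)" for j
      by (rule diff_lin[OF bounded_linear_vec_nth du[OF q]])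
    have ds: "(\<lambda>q. \<Sum>i\<in>UNIV. u q $ i *\<^sub>R dx i u q) differentiable (at q)"
      by (intro diff_sum diff_bilin[OF bounded_bilinear_scaleR dj dxu[OF q]])
    show ?thesis unfolding M_eq
      by (subst dd_add[OF dtu[OF q] ds], subst dd_sum, rule diff_bilin[OF bounded_bilinear_scaleR dj dxu[OF q]])
         (simp add: dd_bilin[OF bounded_bilinear_scaleR dj dxu[OF q]] dcomp[OF du[OF q]])
  qed
  have dloc: "dirderiv v F p = dirderiv v G p" if "\<And>q. q \<in> \<Omega> \<Longrightarrow> F q = G q" for v and F G :: "pt \<Rightarrow> real^3"
    by (rule dd_local[OF O assms(2) that])
  have mloc: "matder u F p = matder u G p" if "\<And>q. q \<in> \<Omega> \<Longrightarrow> F q = G q" for F G :: "pt \<Rightarrow> real^3"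
    unfolding matder_def dt_def dx_def using dloc[OF that] by simp
  have aloc: "along w F p = along w G p" if "\<And>q. q \<in> \<Omega> \<Longrightarrow> F q = G q" for w F G :: "pt \<Rightarrow> real^3"
    unfolding along_def dx_def using dloc[OF that] by simp
  have sw1: "dt (dx j u) p = dx j (dt u) p" for j
    unfolding dt_def dx_def
    by (rule schwarz_vec[OF O assms(2)], 
        insert smooth_diffon[OF su] smooth_diffon[OF smooth_dx[OF su]] smooth_diffon[OF smooth_dt[OF su]]
        smooth_diffon[OF smooth_dt[OF smooth_dx[OF su]]] smooth_diffon[OF smooth_dx[OF smooth_dt[OF su]]],
        simp_all add: dt_def dx_def)
  have sw2: "dx i (dx j u) p = dx j (dx i u) p" for i j
    unfolding dt_def dx_def
    by (rule schwarz_vec[OF O assms(2)], 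
        insert smooth_diffon[OF su] smooth_diffon[OF smooth_dx[OF su, of j]] smooth_diffon[OF smooth_dx[OF su, of i]]
        smooth_diffon[OF smooth_dx[OF smooth_dx[OF su, of j], of i]] smooth_diffon[OF smooth_dx[OF smooth_dx[OF su, of i], of j]],
        simp_all add: dt_def dx_def)
  have conj2: "matder u (matder u b) p = dds \<rho> B (matder u u) p"
  proof -
    have dtb: "dt b p = along b u p - (\<Sum>i\<in>UNIV. u p $ i *\<^sub>R dx i b p)"
      using step1[OF assms(2)] unfolding matder_def by (simp add: eq_diff_eq)
    have "matder u (matder u b) p = matder u (along b u) p" by (rule mloc) (rule step1)
    also have "\<dots> = dds \<rho> B (matder u u) p"
      unfolding dds_def b_def[symmetric]
      unfolding matder_def[of u "along b u"] along_def[of b "matder u u"]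
      unfolding dt_def dx_def dW[OF assms(2)] dM[OF assms(2)]
      unfolding dt_def[symmetric] dx_def[symmetric]
      unfolding along_def
      unfolding dtb along_def
      by (simp add: sum_3 sw1 sw2 algebra_simps)
    finally show ?thesis .
  qed
  have Mq: "matder u u q = ir q *\<^sub>R (- grad pr q + cross3 (curl B q) (B q))" if q: "q \<in> \<Omega>" for q
  proof -
    have "\<rho> q > 0" using Hq[OF q] by blast
    then have "matder u u q = ir q *\<^sub>R (\<rho> q *\<^sub>R matder u u q)" by (simp add: ir_def)
    also have "\<rho> q *\<^sub>R matder u u q = - grad pr q + cross3 (curl B q) (B q)" using Hq[OF q] by blast
    finally show ?thesis .
  qed
  have conj3: "matder u (matder u b) p = along b (\<lambda>q. - (inverse (\<rho> q) *\<^sub>R grad pr q)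
                                    + cross3 (curl B q) (b q)) p"
    unfolding conj2 dds_def b_def[symmetric]
    by (rule aloc) (simp add: Mq b_eq ir_def cross_mult_right scaleR_diff_right)
  define K where "K = (\<lambda>q. inverse (\<rho> q) *\<^sub>R grad (totpress pr B) q)"
  define E where "E = dds \<rho> B B"
  have E_eq: "E = (\<lambda>q. \<Sum>j\<in>UNIV. b q $ j *\<^sub>R dx j B q)"
    by (auto simp: E_def dds_def along_def b_def)
  have dE: "E differentiable (at p)"
    unfolding E_eq
    by (intro diff_sum diff_bilin[OF bounded_bilinear_scaleR] diff_lin[OF bounded_linear_vec_nth]
        db dxB assms(2))
  have dMp: "matder u u differentiable (at p)"
    unfolding M_eq
    by (intro differentiable_add dtu diff_sum diff_bilin[OF bounded_bilinear_scaleR] diff_lin[OF bounded_linear_vec_nth]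
        du dxu assms(2))
  have tp_eq: "totpress pr B = (\<lambda>q. pr q + 1/2 * (B q \<bullet> B q))"
    by (auto simp: totpress_def power2_norm_eq_inner)
  have Kq: "K q = E q - matder u u q" if q: "q \<in> \<Omega>" for q
  proof -
    have dtp: "dx i (totpress pr B) q = dx i pr q + 1/2 * (dx i B q \<bullet> B q + B q \<bullet> dx i B q)" for i
    proof -
      have dBB: "(\<lambda>q. B q \<bullet> B q) differentiable (at q)"
        by (rule diff_bilin[OF bounded_bilinear_inner dB[OF q] dB[OF q]])
      have dh: "(\<lambda>q. 1/2 * (B q \<bullet> B q)) differentiable (at q)"
        by (rule diff_lin[OF bounded_linear_mult_right dBB])
      show ?thesis unfolding tp_eq dx_def dd_add[OF dpr[OF q] dh] dd_lin[OF bounded_linear_mult_right dBB]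
              dd_bilin[OF bounded_bilinear_inner dB[OF q] dB[OF q]] by simp
    qed
    have cB: "curl B q = vector [dx 2 B q $ 3 - dx 3 B q $ 2, dx 3 B q $ 1 - dx 1 B q $ 3, dx 1 B q $ 2 - dx 2 B q $ 1]"
      by (simp add: curl_def dxc[OF dB[OF q]])
    show ?thesis
      unfolding K_def E_eq Mq[OF q] cB grad_def dtp
      by (simp add: b_eq ir_def vec_eq_iff forall_3 sum_3 inner_vec_def cross3_def vector_3 algebra_simps)
  qed
  have conj1: "matder u (matder u b) p - dds \<rho> B (dds \<rho> B B) p = - dds \<rho> B K p"
  proof -
    have "dds \<rho> B K p = along b (\<lambda>q. E q - matder u u q) p"
      unfolding dds_def b_def[symmetric] by (rule aloc) (rule Kq)
    also have "\<dots> = along b E p - along b (matder u u) p"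
      unfolding along_def dx_def
      by (simp add: dd_diff[OF dE dMp] scaleR_diff_right sum_subtractf)
    finally show ?thesis
      unfolding conj2 E_def[symmetric] by (simp add: dds_def b_def)
  qed
  show ?thesis
    using conj1 conj2 conj3 unfolding K_def b_def by simp
qed

end
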